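(* In the model described in the context, there exist parameters $\rho,q$ with $1>\rho>q>0$, a distribution $(\pi^{(0,0)},\pi^{(0,1)},\pi^{(1,0)},\pi^{(1,1)})$ of $(\tilde y_0^+,\tilde y_0^-)$ with $\pi^{(1,0)}<1$, and two label-flip probabilities $\nu_1\neq\nu_2$ in $[0,\tfrac12)$ such that, for each $j\in\{1,2\}$ (with $\nu=\nu_j$), there exists $m\ge2$ with $\Pr(W_2)<\Pr(W_1)$, and the smallest $m_0(\nu_j)$ such that $\Pr(W_2)>\Pr(W_1)$ for all $m\ge m_0(\nu_j)$ satisfies $m_0(\nu_1)\neq m_0(\nu_2)$. (For instance $\rho=0.15$, $q=0.01$, $\pi^{(1,0)}=0.55^2$, $\pi^{(0,1)}=0.45^2$, $\pi^{(0,0)}=\pi^{(1,1)}=0.55\cdot0.45$, $\nu\in\{0.05,0.2\}$.)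
   Context: Model. Fix an integer $m\ge 2$, and reals $1>\rho>q>0$, $0\le\nu<\tfrac12$. A sample consists of ground-truth labels $y_0,y_1,\dots,y_m\in\{0,1\}$ and noisy labels $\tilde y_0,\dots,\tilde y_m\in\{0,1\}$. Given $y_0$, the labels $y_1,\dots,y_m$ are conditionally independent with $\Pr(y_i=1\mid y_0=1)=\rho$ and $\Pr(y_i=1\mid y_0=0)=q$ for $i\in\{1,\dots,m\}$. For $i\in\{1,\dots,m\}$, $\tilde y_i = 1-y_i$ with probability $\nu$ and $\tilde y_i=y_i$ otherwise, the flips being independent of each other and of everything else. We draw one positive sample (superscript $+$, with $y_0^+=1$) and one negative sample (superscript $-$, with $y_0^-=0$) independently. The pair $(\tilde y_0^+,\tilde y_0^-)\in\{0,1\}^2$ has an arbitrary distribution, independent of all $y_i^\pm,\tilde y_i^\pm$ with $i\ge1$; write $\pi^{(u,v)}:=\Pr(\tilde y_0^+=u,\tilde y_0^-=v)$. Fix $\delta>0$. For each sample set $\bar s_{0,i} := \max(\tilde y_0,\tilde y_i)+\delta\min(\tilde y_0,\tilde y_i)$ for $i=1,\dots,m$, and let $\bar r_1\ge \bar r_2$ be the largest and second largest elements of $\{\bar s_{0,1},\dots,\bar s_{0,m}\}$ (as a multiset). For $k\in\{1,2\}$, $\Pr(W_k) := \Pr(\bar r_k^+>\bar r_k^-) + \tfrac12\Pr(\bar r_k^+=\bar r_k^-)$. *)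

theory Defs
  imports "HOL-Probability.Probability"
begin

definition noisy_label :: "real \<Rightarrow> real \<Rightarrow> real \<Rightarrow> bool \<Rightarrow> bool pmf" where
  "noisy_label \<rho> q \<nu> y0 =
     do { y \<leftarrow> bernoulli_pmf (if y0 then \<rho> else q);
          f \<leftarrow> bernoulli_pmf \<nu>;
          return_pmf (if f then \<not> y else y) }"

fun iid_list :: "nat \<Rightarrow> 'a pmf \<Rightarrow> 'a list pmf" where
  "iid_list 0 p = return_pmf []"
| "iid_list (Suc n) p = do { x \<leftarrow> p; xs \<leftarrow> iid_list n p; return_pmf (x # xs) }"

definition score :: "real \<Rightarrow> bool \<Rightarrow> bool \<Rightarrow> real" where
  "score \<delta> u v = max (of_bool u) (of_bool v) + \<delta> * min (of_bool u) (of_bool v)"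

definition kth_largest :: "nat \<Rightarrow> real list \<Rightarrow> real" where
  "kth_largest k xs = rev (sort xs) ! (k - 1)"

text \<open>Joint distribution of (bar r_k^+, bar r_k^-); pi is the distribution of (ty0^+, ty0^-).\<close>
definition rank_pair :: "nat \<Rightarrow> real \<Rightarrow> real \<Rightarrow> real \<Rightarrow> (bool \<times> bool) pmf \<Rightarrow> real \<Rightarrow> nat
                          \<Rightarrow> (real \<times> real) pmf" where
  "rank_pair m \<rho> q \<nu> \<pi> \<delta> k =
     do { (u, v) \<leftarrow> \<pi>;
          xs \<leftarrow> iid_list m (noisy_label \<rho> q \<nu> True);
          ys \<leftarrow> iid_list m (noisy_label \<rho> q \<nu> False);
          return_pmf (kth_largest k (map (score \<delta> u) xs), kth_largest k (map (score \<delta> v) ys)) }"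

definition PrW :: "nat \<Rightarrow> real \<Rightarrow> real \<Rightarrow> real \<Rightarrow> (bool \<times> bool) pmf \<Rightarrow> real \<Rightarrow> nat \<Rightarrow> real" where
  "PrW m \<rho> q \<nu> \<pi> \<delta> k =
     measure_pmf.prob (rank_pair m \<rho> q \<nu> \<pi> \<delta> k) {(a, b). a > b}
     + 1/2 * measure_pmf.prob (rank_pair m \<rho> q \<nu> \<pi> \<delta> k) {(a, b). a = b}"

definition eventually_W2_from :: "real \<Rightarrow> real \<Rightarrow> real \<Rightarrow> (bool \<times> bool) pmf \<Rightarrow> real \<Rightarrow> nat \<Rightarrow> bool" where
  "eventually_W2_from \<rho> q \<nu> \<pi> \<delta> m0 \<longleftrightarrow>
     (\<forall>m\<ge>m0. 2 \<le> m \<longrightarrow> PrW m \<rho> q \<nu> \<pi> \<delta> 2 > PrW m \<rho> q \<nu> \<pi> \<delta> 1)"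

definition is_m0 :: "real \<Rightarrow> real \<Rightarrow> real \<Rightarrow> (bool \<times> bool) pmf \<Rightarrow> real \<Rightarrow> nat \<Rightarrow> bool" where
  "is_m0 \<rho> q \<nu> \<pi> \<delta> m0 \<longleftrightarrow>
     eventually_W2_from \<rho> q \<nu> \<pi> \<delta> m0 \<and>
     (\<forall>m'. eventually_W2_from \<rho> q \<nu> \<pi> \<delta> m' \<longrightarrow> m0 \<le> m')"

end

theory Submission
  imports Defs
begin

abbreviation cnt :: "bool list \<Rightarrow> nat" where "cnt xs \<equiv> length (filter id xs)"

lemma iid_list_eq: "iid_list n p = replicate_pmf n p"
  by (induction n) simp_all

lemma noisy_eq:
  assumes "0 \<le> p" "p \<le> 1" "0 \<le> \<nu>" "\<nu> \<le> 1"
  shows "bernoulli_pmf p \<bind> (\<lambda>y. bernoulli_pmf \<nu> \<bind> (\<lambda>f. return_pmf (if f then \<not> y else y)))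
         = bernoulli_pmf (p*(1-\<nu>)+(1-p)*\<nu>)"
proof -
  have h: "0 \<le> p*(1-\<nu>)+(1-p)*\<nu>" "p*(1-\<nu>)+(1-p)*\<nu> \<le> 1"
  proof -
    have "0 \<le> (1-p)*(1-\<nu>)" "0 \<le> p*\<nu>" "0 \<le> p*(1-\<nu>)" "0 \<le> (1-p)*\<nu>" using assms by simp_all
    then show "0 \<le> p*(1-\<nu>)+(1-p)*\<nu>" "p*(1-\<nu>)+(1-p)*\<nu> \<le> 1" by (simp_all add: algebra_simps)
  qed
  show ?thesis
    apply (rule pmf_eqI)
    subgoal for b using assms h by (cases b) (simp_all add: pmf_bind algebra_simps)
    done
qed

lemma score_False: "score \<delta> False v = of_bool v"
  by (cases v) (simp_all add: score_def)

lemma mset_ofb: "mset (map (\<lambda>v. of_bool v :: real) xs)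
   = mset (replicate (length xs - cnt xs) 0 @ replicate (cnt xs) 1)"
proof (induction xs)
  case Nil then show ?case by simp
next
  case (Cons x xs)
  have le: "cnt xs \<le> length xs" by (rule length_filter_le)
  show ?case using Cons le
    by (cases x) (auto simp: Suc_diff_le)
qed

lemma kth_F:
  assumes "1 \<le> k" "k \<le> length xs"
  shows "kth_largest k (map (score \<delta> False) xs) = of_bool (k \<le> cnt xs)"
proof -
  have le: "cnt xs \<le> length xs" by (rule length_filter_le)
  have m: "map (score \<delta> False) xs = map (\<lambda>v. of_bool v :: real) xs"
    by (simp add: score_False)
  have s: "sort (map (\<lambda>v. of_bool v :: real) xs) = replicate (length xs - cnt xs) 0 @ replicate (cnt xs) 1"
    by (rule properties_for_sort) (simp_all only: mset_ofb, auto simp: sorted_append)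
  show ?thesis unfolding kth_largest_def m s using assms le
    by (auto simp: nth_append)
qed

definition T :: "real \<Rightarrow> nat \<Rightarrow> bool list \<Rightarrow> real" where
  "T \<delta> k xs = kth_largest k (map (score \<delta> False) xs)"

lemma rank_pair_FF0:
  assumes "0 \<le> \<rho>" "\<rho> \<le> 1" "0 \<le> q" "q \<le> 1" "0 \<le> \<nu>" "\<nu> \<le> 1"
  shows "rank_pair m \<rho> q \<nu> (return_pmf (False,False)) \<delta> k =
     pair_pmf (map_pmf (T \<delta> k) (replicate_pmf m (bernoulli_pmf (\<rho>*(1-\<nu>)+(1-\<rho>)*\<nu>))))
              (map_pmf (T \<delta> k) (replicate_pmf m (bernoulli_pmf (q*(1-\<nu>)+(1-q)*\<nu>))))"
  unfolding rank_pair_def noisy_label_def iid_list_eq T_def map_pair[symmetric] pair_pmf_def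
  using assms
  by (simp add: noisy_eq bind_return_pmf map_bind_pmf bind_map_pmf)

lemma map_T:
  assumes "1 \<le> k" "k \<le> m" "0 \<le> p" "p \<le> 1"
  shows "map_pmf (T \<delta> k) (replicate_pmf m (bernoulli_pmf p))
     = map_pmf of_bool (map_pmf (\<lambda>c. k \<le> c) (binomial_pmf m p))"
proof -
  have "map_pmf (T \<delta> k) (replicate_pmf m (bernoulli_pmf p))
      = map_pmf (\<lambda>xs. of_bool (k \<le> cnt xs)) (replicate_pmf m (bernoulli_pmf p))"
    by (rule map_pmf_cong) (use assms in \<open>auto simp: set_replicate_pmf T_def kth_F\<close>)
  then show ?thesis using assms
    by (simp add: binomial_pmf_altdef map_pmf_comp o_def)
qed

lemma prob_pair:
  fixes A B :: "bool pmf"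
  shows "measure_pmf.prob (pair_pmf (map_pmf (\<lambda>b. of_bool b :: real) A) (map_pmf of_bool B)) {(a, b). a > b}
           = pmf A True * pmf B False"
    and "measure_pmf.prob (pair_pmf (map_pmf (\<lambda>b. of_bool b :: real) A) (map_pmf of_bool B)) {(a, b). a = b}
           = pmf A True * pmf B True + pmf A False * pmf B False"
proof -
  have e: "pair_pmf (map_pmf (\<lambda>b. of_bool b :: real) A) (map_pmf of_bool B)
     = map_pmf (\<lambda>(a, b). (of_bool a, of_bool b)) (pair_pmf A B)"
    by (simp add: map_pair)
  have p1: "(\<lambda>(a, b). ((of_bool a)::real, (of_bool b)::real)) -` {(a, b). a > b} = {(True, False)}"
  proof (rule set_eqI)
    fix x :: "bool \<times> bool"
    show "x \<in> (\<lambda>(a, b). ((of_bool a)::real, (of_bool b)::real)) -` {(a, b). a > b} \<longleftrightarrow> x \<in> {(True, False)}"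
      by (cases x; case_tac a; case_tac b; simp)
  qed
  have p2: "(\<lambda>(a, b). ((of_bool a)::real, (of_bool b)::real)) -` {(a, b). a = b} = {(True, True), (False, False)}"
  proof (rule set_eqI)
    fix x :: "bool \<times> bool"
    show "x \<in> (\<lambda>(a, b). ((of_bool a)::real, (of_bool b)::real)) -` {(a, b). a = b} \<longleftrightarrow> x \<in> {(True, True), (False, False)}"
      by (cases x; case_tac a; case_tac b; simp)
  qed
  show "measure_pmf.prob (pair_pmf (map_pmf (\<lambda>b. of_bool b :: real) A) (map_pmf of_bool B)) {(a, b). a > b}
           = pmf A True * pmf B False"
    unfolding e measure_map_pmf p1 measure_pmf_single pmf_pair ..
  have "measure_pmf.prob (pair_pmf A B) {(True, True), (False, False)} = pmf A True * pmf B True + pmf A False * pmf B False"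
    by (subst measure_measure_pmf_finite) (simp_all add: pmf_pair)
  then show "measure_pmf.prob (pair_pmf (map_pmf (\<lambda>b. of_bool b :: real) A) (map_pmf of_bool B)) {(a, b). a = b}
           = pmf A True * pmf B True + pmf A False * pmf B False"
    unfolding e measure_map_pmf p2 .
qed

lemma bool_pmf_sum: "pmf (M :: bool pmf) True = 1 - pmf M False"
proof -
  have "sum (pmf M) UNIV = 1" by (rule sum_pmf_eq_1) auto
  then show ?thesis by (simp add: UNIV_bool)
qed

lemma pre1: "(\<lambda>c::nat. 1 \<le> c) -` {False} = {0}"
proof (rule set_eqI)
  fix c :: nat show "c \<in> (\<lambda>c::nat. 1 \<le> c) -` {False} \<longleftrightarrow> c \<in> {0}" by (cases c) auto
qed

lemma pre2: "(\<lambda>c::nat. 2 \<le> c) -` {False} = {0, 1}"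
proof (rule set_eqI)
  fix c :: nat show "c \<in> (\<lambda>c::nat. 2 \<le> c) -` {False} \<longleftrightarrow> c \<in> {0, 1}" by (cases c) auto
qed

lemma F1: "pmf (map_pmf (\<lambda>c. 1 \<le> c) (binomial_pmf m p)) False = pmf (binomial_pmf m p) 0"
  unfolding pmf_map pre1 measure_pmf_single ..

lemma F2: "pmf (map_pmf (\<lambda>c. 2 \<le> c) (binomial_pmf m p)) False = pmf (binomial_pmf m p) 0 + pmf (binomial_pmf m p) 1"
proof -
  have "pmf (map_pmf (\<lambda>c. 2 \<le> c) (binomial_pmf m p)) False = measure (binomial_pmf m p) {0,1}"
    unfolding pmf_map pre2 ..
  also have "\<dots> = pmf (binomial_pmf m p) 0 + pmf (binomial_pmf m p) 1"
    by (subst measure_measure_pmf_finite) auto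
  finally show ?thesis .
qed

lemma PrW_gen:
  assumes "0 \<le> \<rho>" "\<rho> \<le> 1" "0 \<le> q" "q \<le> 1" "0 \<le> \<nu>" "\<nu> \<le> 1" "1 \<le> k" "k \<le> m"
  defines "A \<equiv> map_pmf (\<lambda>c. k \<le> c) (binomial_pmf m (\<rho>*(1-\<nu>)+(1-\<rho>)*\<nu>))"
      and "B \<equiv> map_pmf (\<lambda>c. k \<le> c) (binomial_pmf m (q*(1-\<nu>)+(1-q)*\<nu>))"
  shows "PrW m \<rho> q \<nu> (return_pmf (False,False)) \<delta> k = 1/2 + (pmf B False - pmf A False) / 2"
proof -
  have h: "0 \<le> x*(1-\<nu>)+(1-x)*\<nu>" "x*(1-\<nu>)+(1-x)*\<nu> \<le> 1" if "0 \<le> x" "x \<le> 1" for x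
  proof -
    have "0 \<le> (1-x)*(1-\<nu>)" "0 \<le> x*\<nu>" "0 \<le> x*(1-\<nu>)" "0 \<le> (1-x)*\<nu>" using assms that by simp_all
    then show "0 \<le> x*(1-\<nu>)+(1-x)*\<nu>" "x*(1-\<nu>)+(1-x)*\<nu> \<le> 1" by (simp_all add: algebra_simps)
  qed
  have r: "rank_pair m \<rho> q \<nu> (return_pmf (False,False)) \<delta> k = pair_pmf (map_pmf of_bool A) (map_pmf of_bool B)"
    unfolding rank_pair_FF0[OF assms(1-6)] A_def B_def
    using assms h by (simp add: map_T)
  show ?thesis unfolding PrW_def r prob_pair bool_pmf_sum[of A] bool_pmf_sum[of B]
    by (simp add: field_simps)
qed

lemma diff_W:
  assumes "0 \<le> \<rho>" "\<rho> \<le> 1" "0 \<le> q" "q \<le> 1" "0 \<le> \<nu>" "\<nu> \<le> 1" "2 \<le> m"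
  defines "a \<equiv> \<rho>*(1-\<nu>)+(1-\<rho>)*\<nu>" and "b \<equiv> q*(1-\<nu>)+(1-q)*\<nu>"
  shows "PrW m \<rho> q \<nu> (return_pmf (False,False)) \<delta> 2 - PrW m \<rho> q \<nu> (return_pmf (False,False)) \<delta> 1
     = real m * (b * (1-b)^(m-1) - a * (1-a)^(m-1)) / 2"
proof -
  have h: "0 \<le> x*(1-\<nu>)+(1-x)*\<nu>" "x*(1-\<nu>)+(1-x)*\<nu> \<le> 1" if "0 \<le> x" "x \<le> 1" for x
  proof -
    have "0 \<le> (1-x)*(1-\<nu>)" "0 \<le> x*\<nu>" "0 \<le> x*(1-\<nu>)" "0 \<le> (1-x)*\<nu>" using assms that by simp_all
    then show "0 \<le> x*(1-\<nu>)+(1-x)*\<nu>" "x*(1-\<nu>)+(1-x)*\<nu> \<le> 1" by (simp_all add: algebra_simps)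
  qed
  have ha: "0 \<le> a" "a \<le> 1" and hb: "0 \<le> b" "b \<le> 1" using h assms unfolding a_def b_def by auto
  have p1: "pmf (binomial_pmf m x) 1 = real m * x * (1-x)^(m-1)" if "0 \<le> x" "x \<le> 1" for x
    using that by simp
  have w2: "PrW m \<rho> q \<nu> (return_pmf (False,False)) \<delta> 2 = 1/2 + (pmf (binomial_pmf m b) 0 + pmf (binomial_pmf m b) 1 - pmf (binomial_pmf m a) 0 - pmf (binomial_pmf m a) 1) / 2"
    using PrW_gen[OF assms(1-6), of 2 m \<delta>] assms(7) unfolding F2 a_def b_def by simp
  have w1: "PrW m \<rho> q \<nu> (return_pmf (False,False)) \<delta> 1 = 1/2 + (pmf (binomial_pmf m b) 0 - pmf (binomial_pmf m a) 0) / 2"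
    using PrW_gen[OF assms(1-6), of 1 m \<delta>] assms(7) unfolding F1 a_def b_def by simp
  show ?thesis unfolding w1 w2 p1[OF ha] p1[OF hb]
    by (simp add: field_simps)
qed

lemma ind1: "(1/2::real) * (1/2)^(n+3) < (1/10) * (9/10)^(n+3)"
proof (induction n)
  case 0 then show ?case by (simp add: eval_nat_numeral)
next
  case (Suc n)
  have "(1/2::real) * (1/2)^(Suc n+3) = ((1/2) * (1/2)^(n+3)) * (1/2)"
    by (simp only: add_Suc power_Suc mult_ac)
  also have "\<dots> < ((1/10) * (9/10)^(n+3)) * (1/2)" using Suc by simp
  also have "\<dots> \<le> ((1/10) * (9/10)^(n+3)) * (9/10)" by simp
  also have "\<dots> = (1/10) * (9/10)^(Suc n+3)" by (simp only: add_Suc power_Suc mult_ac)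
  finally show ?case .
qed

lemma ind2: "(1/2::real) * (1/2)^(n+2) < (1/5) * (4/5)^(n+2)"
proof (induction n)
  case 0 then show ?case by (simp add: eval_nat_numeral)
next
  case (Suc n)
  have "(1/2::real) * (1/2)^(Suc n+2) = ((1/2) * (1/2)^(n+2)) * (1/2)" by simp
  also have "\<dots> < ((1/5) * (4/5)^(n+2)) * (1/2)" using Suc by simp
  also have "\<dots> \<le> ((1/5) * (4/5)^(n+2)) * (4/5)" by simp
  also have "\<dots> = (1/5) * (4/5)^(Suc n+2)" by simp
  finally show ?case .
qed

abbreviation "\<pi>0 \<equiv> return_pmf (False, False) :: (bool \<times> bool) pmf"

lemma D1: "2 \<le> m \<Longrightarrow> PrW m (1/2) (1/10) 0 \<pi>0 \<delta> 2 - PrW m (1/2) (1/10) 0 \<pi>0 \<delta> 1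
   = real m * ((1/10) * (9/10)^(m-1) - (1/2) * (1/2)^(m-1)) / 2"
  using diff_W[of "1/2" "1/10" 0 m \<delta>] by simp

lemma D2: "2 \<le> m \<Longrightarrow> PrW m (1/2) (1/10) (1/8) \<pi>0 \<delta> 2 - PrW m (1/2) (1/10) (1/8) \<pi>0 \<delta> 1
   = real m * ((1/5) * (4/5)^(m-1) - (1/2) * (1/2)^(m-1)) / 2"
  using diff_W[of "1/2" "1/10" "1/8" m \<delta>] by simp

lemma ev1: "eventually_W2_from (1/2) (1/10) 0 \<pi>0 \<delta> 4"
  unfolding eventually_W2_from_def
proof (intro allI impI)
  fix m :: nat assume "4 \<le> m" "2 \<le> m"
  then obtain n where n: "m = n + 4" by (metis add.commute le_Suc_ex)
  have mm: "m - 1 = n + 3" using n by simp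
  have "(1/2::real) * (1/2)^(m-1) < (1/10) * (9/10)^(m-1)" unfolding mm by (rule ind1)
  then have "0 < real m * ((1/10) * (9/10)^(m-1) - (1/2) * (1/2)^(m-1)) / 2" using n by simp
  then show "PrW m (1/2) (1/10) 0 \<pi>0 \<delta> 1 < PrW m (1/2) (1/10) 0 \<pi>0 \<delta> 2"
    using D1[OF \<open>2 \<le> m\<close>, of \<delta>] by linarith
qed

lemma ev2: "eventually_W2_from (1/2) (1/10) (1/8) \<pi>0 \<delta> 3"
  unfolding eventually_W2_from_def
proof (intro allI impI)
  fix m :: nat assume "3 \<le> m" "2 \<le> m"
  then obtain n where n: "m = n + 3" by (metis add.commute le_Suc_ex)
  have mm: "m - 1 = n + 2" using n by simp
  have "(1/2::real) * (1/2)^(m-1) < (1/5) * (4/5)^(m-1)" unfolding mm by (rule ind2)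
  then have "0 < real m * ((1/5) * (4/5)^(m-1) - (1/2) * (1/2)^(m-1)) / 2" using n by simp
  then show "PrW m (1/2) (1/10) (1/8) \<pi>0 \<delta> 1 < PrW m (1/2) (1/10) (1/8) \<pi>0 \<delta> 2"
    using D2[OF \<open>2 \<le> m\<close>, of \<delta>] by linarith
qed

lemma not1_3: "PrW 3 (1/2) (1/10) 0 \<pi>0 \<delta> 2 < PrW 3 (1/2) (1/10) 0 \<pi>0 \<delta> 1"
  using D1[of 3 \<delta>] by (simp add: eval_nat_numeral)
lemma not1_2: "PrW 2 (1/2) (1/10) 0 \<pi>0 \<delta> 2 < PrW 2 (1/2) (1/10) 0 \<pi>0 \<delta> 1"
  using D1[of 2 \<delta>] by (simp add: eval_nat_numeral)
lemma not2_2: "PrW 2 (1/2) (1/10) (1/8) \<pi>0 \<delta> 2 < PrW 2 (1/2) (1/10) (1/8) \<pi>0 \<delta> 1"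
  using D2[of 2 \<delta>] by (simp add: eval_nat_numeral)

lemma m01: "is_m0 (1/2) (1/10) 0 \<pi>0 \<delta> 4"
  unfolding is_m0_def
proof (intro conjI allI impI)
  show "eventually_W2_from (1/2) (1/10) 0 \<pi>0 \<delta> 4" by (rule ev1)
  fix m' assume h: "eventually_W2_from (1/2) (1/10) 0 \<pi>0 \<delta> m'"
  show "4 \<le> m'"
  proof (rule ccontr)
    assume "\<not> 4 \<le> m'"
    then have "3 \<ge> m'" by simp
    then have "PrW 3 (1/2) (1/10) 0 \<pi>0 \<delta> 2 > PrW 3 (1/2) (1/10) 0 \<pi>0 \<delta> 1"
      using h unfolding eventually_W2_from_def by simp
    then show False using not1_3[of \<delta>] by simp
  qed
qed

lemma m02: "is_m0 (1/2) (1/10) (1/8) \<pi>0 \<delta> 3"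
  unfolding is_m0_def
proof (intro conjI allI impI)
  show "eventually_W2_from (1/2) (1/10) (1/8) \<pi>0 \<delta> 3" by (rule ev2)
  fix m' assume h: "eventually_W2_from (1/2) (1/10) (1/8) \<pi>0 \<delta> m'"
  show "3 \<le> m'"
  proof (rule ccontr)
    assume "\<not> 3 \<le> m'"
    then have "2 \<ge> m'" by simp
    then have "PrW 2 (1/2) (1/10) (1/8) \<pi>0 \<delta> 2 > PrW 2 (1/2) (1/10) (1/8) \<pi>0 \<delta> 1"
      using h unfolding eventually_W2_from_def by simp
    then show False using not2_2[of \<delta>] by simp
  qed
qed

theorem theorem2:
  fixes \<delta> :: real
  assumes "\<delta> > 0"
  shows "\<exists>\<rho> q (\<pi> :: (bool \<times> bool) pmf) \<nu>1 \<nu>2.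
           0 < q \<and> q < \<rho> \<and> \<rho> < 1 \<and> pmf \<pi> (True, False) < 1 \<and>
           0 \<le> \<nu>1 \<and> \<nu>1 < 1/2 \<and> 0 \<le> \<nu>2 \<and> \<nu>2 < 1/2 \<and> \<nu>1 \<noteq> \<nu>2 \<and>
           (\<forall>\<nu>\<in>{\<nu>1, \<nu>2}. \<exists>m\<ge>2. PrW m \<rho> q \<nu> \<pi> \<delta> 2 < PrW m \<rho> q \<nu> \<pi> \<delta> 1) \<and>
           (\<exists>m01 m02. is_m0 \<rho> q \<nu>1 \<pi> \<delta> m01 \<and> is_m0 \<rho> q \<nu>2 \<pi> \<delta> m02 \<and> m01 \<noteq> m02)"
proof (rule exI[of _ "1/2"], rule exI[of _ "1/10"], rule exI[of _ \<pi>0], rule exI[of _ 0], rule exI[of _ "1/8"])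
  have a: "\<forall>\<nu>\<in>{0, 1/8}. \<exists>m\<ge>2. PrW m (1/2) (1/10) \<nu> \<pi>0 \<delta> 2 < PrW m (1/2) (1/10) \<nu> \<pi>0 \<delta> 1"
    using not1_2[of \<delta>] not2_2[of \<delta>] by auto
  have b: "\<exists>m01 m02. is_m0 (1/2) (1/10) 0 \<pi>0 \<delta> m01 \<and> is_m0 (1/2) (1/10) (1/8) \<pi>0 \<delta> m02 \<and> m01 \<noteq> m02"
  proof (intro exI conjI)
    show "is_m0 (1/2) (1/10) 0 \<pi>0 \<delta> 4" by (rule m01)
    show "is_m0 (1/2) (1/10) (1/8) \<pi>0 \<delta> 3" by (rule m02)
  qed simp
  show "0 < (1/10::real) \<and> (1/10::real) < 1/2 \<and> (1/2::real) < 1 \<and> pmf \<pi>0 (True, False) < 1 \<and>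
           0 \<le> (0::real) \<and> (0::real) < 1/2 \<and> 0 \<le> (1/8::real) \<and> (1/8::real) < 1/2 \<and> (0::real) \<noteq> 1/8 \<and>
           (\<forall>\<nu>\<in>{0, 1/8}. \<exists>m\<ge>2. PrW m (1/2) (1/10) \<nu> \<pi>0 \<delta> 2 < PrW m (1/2) (1/10) \<nu> \<pi>0 \<delta> 1) \<and>
           (\<exists>m01 m02. is_m0 (1/2) (1/10) 0 \<pi>0 \<delta> m01 \<and> is_m0 (1/2) (1/10) (1/8) \<pi>0 \<delta> m02 \<and> m01 \<noteq> m02)"
    using a b by simp
qed

end
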